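(* Let $G$ be a multigraph (loops and parallel edges allowed) and $e$ any edge of $G$. Then $$P(\mathcal{H}_G,\lambda)=\lambda P(\mathcal{H}_{G-e},\lambda)-P(\mathcal{H}_{G/e},\lambda),$$ where $G-e$ is obtained by deleting $e$ and $G/e$ by contracting $e$ (for a loop $e$, $G/e=G-e$).
   Context: A hypergraph $\mathcal{H}=(\mathcal{V},\mathcal{E})$ consists of a finite vertex set $\mathcal{V}$ and a set $\mathcal{E}$ of subsets of $\mathcal{V}$, each of size at least $1$, called edges. For a positive integer $\lambda$, a weak proper $\lambda$-colouring of $\mathcal{H}$ is a map $\phi:\mathcal{V}\to\{1,\dots,\lambda\}$ such that $|\{\phi(v):v\in e\}|>1$ for every $e\in\mathcal{E}$. $P(\mathcal{H},\lambda)$ denotes the number of weak proper $\lambda$-colourings; it is a polynomial in $\lambda$. For a multigraph $G=(V,E)$, $\mathcal{H}_G$ is the hypergraph with vertex set $V\cup\{w_e:e\in E\}$ (distinct new vertices $w_e$) and edge set $\{\{u_e,v_e,w_e\}:e\in E\}$, where $u_e,v_e$ are the ends of $e$. *)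

theory Defs
  imports "HOL-Library.FuncSet"
begin

definition hyp_chrom :: "'v set \<Rightarrow> 'v set set \<Rightarrow> nat \<Rightarrow> nat" where
  "hyp_chrom V E lam =
     card {\<phi> \<in> V \<rightarrow>\<^sub>E {1..lam}. \<forall>e\<in>E. card (\<phi> ` e) > 1}"

text \<open>A multigraph: finite vertex set V, finite edge set E (edge identities of type 'b),
and an ends map giving the two (possibly equal) ends of each edge.\<close>

definition multigraph :: "'a set \<Rightarrow> 'b set \<Rightarrow> ('b \<Rightarrow> 'a \<times> 'a) \<Rightarrow> bool" where
  "multigraph V E ends \<longleftrightarrow> finite V \<and> finite E \<and>
     (\<forall>e\<in>E. fst (ends e) \<in> V \<and> snd (ends e) \<in> V)"

text \<open>The hypergraph H_G: vertices V plus a new vertex w_e = Inr e for every edge e;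
one hyperedge {u_e, v_e, w_e} per edge.\<close>

definition HG_vertices :: "'a set \<Rightarrow> 'b set \<Rightarrow> ('a + 'b) set" where
  "HG_vertices V E = Inl ` V \<union> Inr ` E"

definition HG_edges :: "'b set \<Rightarrow> ('b \<Rightarrow> 'a \<times> 'a) \<Rightarrow> ('a + 'b) set set" where
  "HG_edges E ends = (\<lambda>e. {Inl (fst (ends e)), Inl (snd (ends e)), Inr e}) ` E"

definition PH :: "'a set \<Rightarrow> 'b set \<Rightarrow> ('b \<Rightarrow> 'a \<times> 'a) \<Rightarrow> nat \<Rightarrow> nat" where
  "PH V E ends lam = hyp_chrom (HG_vertices V E) (HG_edges E ends) lam"

text \<open>Contraction of edge e with ends (u,v): if u = v (loop) this is deletion; otherwise
v is merged into u (vertex v removed, every end v renamed to u), and e is removed.\<close>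

definition merge_map :: "'a \<Rightarrow> 'a \<Rightarrow> 'a \<Rightarrow> 'a" where
  "merge_map u v x = (if x = v then u else x)"

definition contract_V :: "'a set \<Rightarrow> ('b \<Rightarrow> 'a \<times> 'a) \<Rightarrow> 'b \<Rightarrow> 'a set" where
  "contract_V V ends e = (if fst (ends e) = snd (ends e) then V else V - {snd (ends e)})"

definition contract_ends :: "('b \<Rightarrow> 'a \<times> 'a) \<Rightarrow> 'b \<Rightarrow> 'b \<Rightarrow> 'a \<times> 'a" where
  "contract_ends ends e f =
     (merge_map (fst (ends e)) (snd (ends e)) (fst (ends f)),
      merge_map (fst (ends e)) (snd (ends e)) (snd (ends f)))"

end

theory Submission
  imports Defs
begin

lemma card3_gt1: "(1 < card {a,b,c::'x}) = (a \<noteq> b \<or> b \<noteq> c)"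
  by (cases "a = b"; cases "b = c"; cases "a = c"; simp add: card_insert_if)

lemma card3_gt1': "(Suc 0 < card {a,b,c::'x}) = (a \<noteq> b \<or> b \<noteq> c)"
  using card3_gt1 by simp

definition okf :: "('b \<Rightarrow> 'a \<times> 'a) \<Rightarrow> ('a + 'b \<Rightarrow> nat) \<Rightarrow> 'b \<Rightarrow> bool" where
  "okf en \<phi> f = (\<phi> (Inl (fst (en f))) \<noteq> \<phi> (Inl (snd (en f))) \<or> \<phi> (Inl (snd (en f))) \<noteq> \<phi> (Inr f))"

lemma PHe: "PH V E en lam = card {\<phi> \<in> (Inl ` V \<union> Inr ` E) \<rightarrow>\<^sub>E {1..lam}. \<forall>f\<in>E. okf en \<phi> f}"
  by (simp add: PH_def hyp_chrom_def HG_vertices_def HG_edges_def okf_def card3_gt1')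

lemma upd_PiE_del: "x \<notin> D \<Longrightarrow> \<phi> \<in> insert x D \<rightarrow>\<^sub>E C \<Longrightarrow> \<phi>(x := undefined) \<in> D \<rightarrow>\<^sub>E C"
  by (auto simp: PiE_def extensional_def Pi_iff)

lemma upd_PiE_ins: "x \<notin> D \<Longrightarrow> \<psi> \<in> D \<rightarrow>\<^sub>E C \<Longrightarrow> c \<in> C \<Longrightarrow> \<psi>(x := c) \<in> insert x D \<rightarrow>\<^sub>E C"
  by (auto simp: PiE_def extensional_def Pi_iff)

lemma okall: "(\<forall>f\<in>E-{e}. okf ends (\<phi>(Inr e := c)) f) = (\<forall>f\<in>E-{e}. okf ends \<phi> f)"
  by (simp add: okf_def)

lemma okf_transfer:
  assumes "\<chi> (Inl (m (fst (ends f)))) = \<phi> (Inl (fst (ends f)))"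
    "\<chi> (Inl (m (snd (ends f)))) = \<phi> (Inl (snd (ends f)))"
    "\<chi> (Inr f) = \<phi> (Inr f)" "en' f = (m (fst (ends f)), m (snd (ends f)))"
  shows "okf en' \<chi> f = okf ends \<phi> f"
  using assms by (simp add: okf_def)

theorem proposition5:
  fixes V :: "'a set" and E :: "'b set" and ends :: "'b \<Rightarrow> 'a \<times> 'a"
    and e :: 'b and lam :: nat
  assumes "multigraph V E ends" and "e \<in> E" and "lam \<ge> 1"
  shows "int (PH V E ends lam) =
           int lam * int (PH V (E - {e}) ends lam)
           - int (PH (contract_V V ends e) (E - {e}) (contract_ends ends e) lam)"
proof -
  obtain u v where uv: "ends e = (u,v)" by (cases "ends e")
  have fin: "finite V" "finite E" using assms(1) by (auto simp: multigraph_def)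
  have uV: "u \<in> V" and vV: "v \<in> V" using assms(1,2) uv by (force simp: multigraph_def)+
  have endsV: "\<And>f. f \<in> E \<Longrightarrow> fst (ends f) \<in> V \<and> snd (ends f) \<in> V"
    using assms(1) by (auto simp: multigraph_def)
  define C where "C = {1..lam}"
  define D' where "D' = Inl ` V \<union> Inr ` (E - {e})"
  define A where "A = {\<phi> \<in> D' \<rightarrow>\<^sub>E C. \<forall>f\<in>E-{e}. okf ends \<phi> f}"
  define T where "T = {\<phi> \<in> (Inl ` V \<union> Inr ` E) \<rightarrow>\<^sub>E C. \<forall>f\<in>E-{e}. okf ends \<phi> f}"
  define S where "S = {\<phi> \<in> (Inl ` V \<union> Inr ` E) \<rightarrow>\<^sub>E C. \<forall>f\<in>E. okf ends \<phi> f}"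
  define M where "M = {\<phi> \<in> A. \<phi> (Inl u) = \<phi> (Inl v)}"
  have finT: "finite T" unfolding T_def C_def
    by (rule finite_subset[of _ "(Inl ` V \<union> Inr ` E) \<rightarrow>\<^sub>E {1..lam}"]) (use fin in \<open>auto intro!: finite_PiE\<close>)
  have SsubT: "S \<subseteq> T" unfolding S_def T_def by auto
  have TS: "T - S = {\<phi>\<in>T. \<not> okf ends \<phi> e}"
    unfolding S_def T_def using assms(2) by auto
  have DD: "Inl ` V \<union> Inr ` E = insert (Inr e) D'" unfolding D'_def using assms(2) by auto
  have eD: "Inr e \<notin> D'" unfolding D'_def by auto
  have okupd: "\<And>\<phi> c f. f \<noteq> e \<Longrightarrow> okf ends (\<phi>(Inr e := c)) f = okf ends \<phi> f"
    by (simp add: okf_def)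
  have cardT: "card T = lam * card A"
  proof -
    have "bij_betw (\<lambda>\<phi>. (\<phi>(Inr e := undefined), \<phi> (Inr e))) T (A \<times> C)"
    proof (rule bij_betw_byWitness[where f' = "\<lambda>(\<psi>, c). \<psi>(Inr e := c)"])
      show "\<forall>a\<in>T. (case (a(Inr e := undefined), a (Inr e)) of (\<psi>, c) \<Rightarrow> \<psi>(Inr e := c)) = a"
        by simp
      show "\<forall>a'\<in>A \<times> C. (\<lambda>\<phi>. (\<phi>(Inr e := undefined), \<phi> (Inr e))) (case a' of (\<psi>, c) \<Rightarrow> \<psi>(Inr e := c)) = a'"
      proof
        fix a' assume "a' \<in> A \<times> C"
        then obtain \<psi> c where a': "a' = (\<psi>, c)" "\<psi> \<in> D' \<rightarrow>\<^sub>E C" by (auto simp: A_def)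
        have "\<psi> (Inr e) = undefined" using a'(2) eD by (rule PiE_arb)
        then show "(\<lambda>\<phi>. (\<phi>(Inr e := undefined), \<phi> (Inr e))) (case a' of (\<psi>, c) \<Rightarrow> \<psi>(Inr e := c)) = a'"
          using a'(1) by (simp add: fun_upd_idem_iff)
      qed
      show "(\<lambda>\<phi>. (\<phi>(Inr e := undefined), \<phi> (Inr e))) ` T \<subseteq> A \<times> C"
      proof (rule image_subsetI)
        fix \<phi> assume "\<phi> \<in> T"
        then have p1: "\<phi> \<in> insert (Inr e) D' \<rightarrow>\<^sub>E C" and p2: "\<forall>f\<in>E-{e}. okf ends \<phi> f"
          unfolding T_def DD by auto
        have "\<phi>(Inr e := undefined) \<in> A" unfolding A_def using upd_PiE_del[OF eD p1] p2 by (simp add: okall)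
        moreover have "\<phi> (Inr e) \<in> C" using p1 by (auto simp: PiE_iff)
        ultimately show "(\<phi>(Inr e := undefined), \<phi> (Inr e)) \<in> A \<times> C" by simp
      qed
      show "(\<lambda>(\<psi>, c). \<psi>(Inr e := c)) ` (A \<times> C) \<subseteq> T"
      proof (rule image_subsetI)
        fix a' assume "a' \<in> A \<times> C"
        then obtain \<psi> c where a': "a' = (\<psi>, c)" "\<psi> \<in> D' \<rightarrow>\<^sub>E C" "c \<in> C" "\<forall>f\<in>E-{e}. okf ends \<psi> f"
          by (auto simp: A_def)
        have "\<psi>(Inr e := c) \<in> T" unfolding T_def DD using upd_PiE_ins[OF eD a'(2,3)] a'(4) by (simp add: okall)
        then show "(case a' of (\<psi>, c) \<Rightarrow> \<psi>(Inr e := c)) \<in> T" using a'(1) by simp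
      qed
    qed
    then have "card T = card (A \<times> C)" by (rule bij_betw_same_card)
    then show ?thesis by (simp add: card_cartesian_product C_def)
  qed
  have cardTS: "card (T - S) = card M"
  proof -
    have "bij_betw (\<lambda>\<phi>. \<phi>(Inr e := undefined)) {\<phi>\<in>T. \<not> okf ends \<phi> e} M"
    proof (rule bij_betw_byWitness[where f' = "\<lambda>\<psi>. \<psi>(Inr e := \<psi> (Inl u))"])
      show "\<forall>a\<in>{\<phi> \<in> T. \<not> okf ends \<phi> e}. (a(Inr e := undefined))(Inr e := (a(Inr e := undefined)) (Inl u)) = a"
        using uv by (simp add: okf_def)
      show "\<forall>a'\<in>M. (a'(Inr e := a' (Inl u)))(Inr e := undefined) = a'"
      proof
        fix a' assume "a' \<in> M"
        then have "a' \<in> D' \<rightarrow>\<^sub>E C" by (simp add: M_def A_def)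
        then have "a' (Inr e) = undefined" using eD by (rule PiE_arb)
        then show "(a'(Inr e := a' (Inl u)))(Inr e := undefined) = a'" by (simp add: fun_upd_idem_iff)
      qed
      show "(\<lambda>\<phi>. \<phi>(Inr e := undefined)) ` {\<phi> \<in> T. \<not> okf ends \<phi> e} \<subseteq> M"
      proof (rule image_subsetI)
        fix \<phi> assume "\<phi> \<in> {\<phi> \<in> T. \<not> okf ends \<phi> e}"
        then have p1: "\<phi> \<in> insert (Inr e) D' \<rightarrow>\<^sub>E C" and p2: "\<forall>f\<in>E-{e}. okf ends \<phi> f"
          and p3: "\<not> okf ends \<phi> e" unfolding T_def DD by auto
        have "\<phi>(Inr e := undefined) \<in> D' \<rightarrow>\<^sub>E C" using upd_PiE_del[OF eD p1] .
        moreover have "\<forall>f\<in>E-{e}. okf ends (\<phi>(Inr e := undefined)) f" using p2 by (simp add: okall)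
        moreover have "\<phi> (Inl u) = \<phi> (Inl v)" using p3 uv by (simp add: okf_def)
        ultimately show "\<phi>(Inr e := undefined) \<in> M" unfolding M_def A_def by simp
      qed
      show "(\<lambda>\<psi>. \<psi>(Inr e := \<psi> (Inl u))) ` M \<subseteq> {\<phi> \<in> T. \<not> okf ends \<phi> e}"
      proof (rule image_subsetI)
        fix \<psi> assume "\<psi> \<in> M"
        then have p1: "\<psi> \<in> D' \<rightarrow>\<^sub>E C" and p2: "\<forall>f\<in>E-{e}. okf ends \<psi> f"
          and p3: "\<psi> (Inl u) = \<psi> (Inl v)" unfolding M_def A_def by auto
        have "Inl u \<in> D'" using uV unfolding D'_def by auto
        then have "\<psi> (Inl u) \<in> C" using p1 by auto
        then have "\<psi>(Inr e := \<psi> (Inl u)) \<in> insert (Inr e) D' \<rightarrow>\<^sub>E C" using upd_PiE_ins[OF eD p1] by blast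
        moreover have "\<forall>f\<in>E-{e}. okf ends (\<psi>(Inr e := \<psi> (Inl u))) f" using p2 by (simp add: okall)
        moreover have "\<not> okf ends (\<psi>(Inr e := \<psi> (Inl u))) e" using p3 uv by (simp add: okf_def)
        ultimately show "\<psi>(Inr e := \<psi> (Inl u)) \<in> {\<phi> \<in> T. \<not> okf ends \<phi> e}" unfolding T_def DD by simp
      qed
    qed
    then show ?thesis using TS by (simp add: bij_betw_same_card)
  qed
  have cardM: "card M = PH (contract_V V ends e) (E - {e}) (contract_ends ends e) lam"
  proof (cases "u = v")
    case True
    have "contract_V V ends e = V" using True uv by (simp add: contract_V_def)
    moreover have "contract_ends ends e = ends"
      using True uv by (simp add: contract_ends_def merge_map_def fun_eq_iff)
    moreover have "M = A" using True unfolding M_def by simp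
    ultimately show ?thesis unfolding A_def C_def D'_def by (simp add: PHe)
  next
    case False
    define m where "m = merge_map u v"
    define en' where "en' = contract_ends ends e"
    define D'' where "D'' = Inl ` (V - {v}) \<union> Inr ` (E - {e})"
    define K where "K = {\<psi> \<in> D'' \<rightarrow>\<^sub>E C. \<forall>f\<in>E-{e}. okf en' \<psi> f}"
    have cV: "contract_V V ends e = V - {v}" using False uv by (simp add: contract_V_def)
    have PK: "PH (contract_V V ends e) (E - {e}) (contract_ends ends e) lam = card K"
      unfolding cV K_def D''_def C_def en'_def by (rule PHe)
    have en'f: "\<And>f. en' f = (m (fst (ends f)), m (snd (ends f)))"
      unfolding en'_def m_def contract_ends_def uv by simp
    have mV: "\<And>a. a \<in> V \<Longrightarrow> Inl (m a) \<in> D''"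
      using uV False unfolding m_def merge_map_def D''_def by auto
    have D'D'': "D' = insert (Inl v) D''" unfolding D'_def D''_def using vV by auto
    have vD: "Inl v \<notin> D''" unfolding D''_def by auto
    have uD: "Inl u \<in> D''" unfolding D''_def using uV False by auto
    have "bij_betw (\<lambda>\<phi>. restrict \<phi> D'') M K"
    proof (rule bij_betw_byWitness[where f' = "\<lambda>\<psi>. \<psi>(Inl v := \<psi> (Inl u))"])
      show "\<forall>a\<in>M. (restrict a D'')(Inl v := restrict a D'' (Inl u)) = a"
      proof
        fix \<phi> assume "\<phi> \<in> M"
        then have p1: "\<phi> \<in> insert (Inl v) D'' \<rightarrow>\<^sub>E C" and p3: "\<phi> (Inl u) = \<phi> (Inl v)"
          unfolding M_def A_def by (auto simp only: D'D'' mem_Collect_eq)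
        show "(restrict \<phi> D'')(Inl v := restrict \<phi> D'' (Inl u)) = \<phi>"
        proof
          fix x show "((restrict \<phi> D'')(Inl v := restrict \<phi> D'' (Inl u))) x = \<phi> x"
          proof (cases "x = Inl v")
            case True then show ?thesis using p3 uD by simp
          next
            case False
            show ?thesis
            proof (cases "x \<in> D''")
              case True then show ?thesis using False by simp
            next
              case nD: False
              then have "x \<notin> insert (Inl v) D''" using False by simp
              then show ?thesis using nD False PiE_arb[OF p1] by simp
            qed
          qed
        qed
      qed
      show "\<forall>a'\<in>K. restrict (a'(Inl v := a' (Inl u))) D'' = a'"
      proof
        fix \<psi> assume "\<psi> \<in> K"
        then have p1: "\<psi> \<in> D'' \<rightarrow>\<^sub>E C" unfolding K_def by auto
        show "restrict (\<psi>(Inl v := \<psi> (Inl u))) D'' = \<psi>"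
        proof
          fix x show "restrict (\<psi>(Inl v := \<psi> (Inl u))) D'' x = \<psi> x"
          proof (cases "x \<in> D''")
            case True then have "x \<noteq> Inl v" using vD by auto
            then show ?thesis using True by simp
          next
            case False then show ?thesis using PiE_arb[OF p1] by simp
          qed
        qed
      qed
      show "(\<lambda>\<phi>. restrict \<phi> D'') ` M \<subseteq> K"
      proof (rule image_subsetI)
        fix \<phi> assume "\<phi> \<in> M"
        then have p1: "\<phi> \<in> insert (Inl v) D'' \<rightarrow>\<^sub>E C" and p2: "\<forall>f\<in>E-{e}. okf ends \<phi> f"
          and p3: "\<phi> (Inl u) = \<phi> (Inl v)"
          unfolding M_def A_def by (auto simp only: D'D'' mem_Collect_eq)
        have mm: "\<And>a. a \<in> V \<Longrightarrow> restrict \<phi> D'' (Inl (m a)) = \<phi> (Inl a)"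
          using mV p3 unfolding m_def merge_map_def by auto
        have "restrict \<phi> D'' \<in> D'' \<rightarrow>\<^sub>E C" using p1 by (auto simp: restrict_PiE_iff PiE_iff)
        moreover have "\<forall>f\<in>E-{e}. okf en' (restrict \<phi> D'') f"
        proof
          fix f assume f: "f \<in> E - {e}"
          have "okf en' (restrict \<phi> D'') f = okf ends \<phi> f"
            by (rule okf_transfer[where m = m]) (use f endsV mm en'f in \<open>auto simp: D''_def\<close>)
          then show "okf en' (restrict \<phi> D'') f" using p2 f by simp
        qed
        ultimately show "restrict \<phi> D'' \<in> K" unfolding K_def by simp
      qed
      show "(\<lambda>\<psi>. \<psi>(Inl v := \<psi> (Inl u))) ` K \<subseteq> M"
      proof (rule image_subsetI)
        fix \<psi> assume "\<psi> \<in> K"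
        then have p1: "\<psi> \<in> D'' \<rightarrow>\<^sub>E C" and p2: "\<forall>f\<in>E-{e}. okf en' \<psi> f"
          unfolding K_def by auto
        have uC: "\<psi> (Inl u) \<in> C" using p1 uD by auto
        have mm: "\<And>a. \<psi> (Inl (m a)) = (\<psi>(Inl v := \<psi> (Inl u))) (Inl a)"
          unfolding m_def merge_map_def by auto
        have "\<psi>(Inl v := \<psi> (Inl u)) \<in> D' \<rightarrow>\<^sub>E C" unfolding D'D'' by (rule upd_PiE_ins[OF vD p1 uC])
        moreover have "\<forall>f\<in>E-{e}. okf ends (\<psi>(Inl v := \<psi> (Inl u))) f"
        proof
          fix f assume f: "f \<in> E - {e}"
          have "okf en' \<psi> f = okf ends (\<psi>(Inl v := \<psi> (Inl u))) f"
            by (rule okf_transfer[where m = m]) (use mm en'f in auto)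
          then show "okf ends (\<psi>(Inl v := \<psi> (Inl u))) f" using p2 f by simp
        qed
        moreover have "(\<psi>(Inl v := \<psi> (Inl u))) (Inl u) = (\<psi>(Inl v := \<psi> (Inl u))) (Inl v)"
          by simp
        ultimately show "\<psi>(Inl v := \<psi> (Inl u)) \<in> M" unfolding M_def A_def by simp
      qed
    qed
    then show ?thesis using PK by (simp add: bij_betw_same_card)
  qed
  have cS: "card S = card T - card (T - S)"
    using card_Diff_subset[OF finite_subset[OF SsubT finT] SsubT] card_mono[OF finT SsubT] by simp
  have "card (T - S) \<le> card T" by (rule card_mono[OF finT]) auto
  moreover have "PH V E ends lam = card S" unfolding S_def C_def by (rule PHe)
  moreover have "PH V (E - {e}) ends lam = card A" unfolding A_def C_def D'_def by (rule PHe)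
  ultimately show ?thesis using cS cardT cardTS cardM by (simp add: of_nat_diff)
qed

end
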